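(* Let $L\ge1$ be an integer and $x_i(k)$, $i\in\mathbb Z$, $k\ge0$, real numbers. For each $i\in\mathbb Z$ and $j\in\{0,1,\dots,L\}$ define $z_{ij}(k)$ for integers $k$ as follows. If $k<j$, $z_{ij}(k)=0$. For each $s\ge j$ with $s\equiv j \pmod{L+1}$: $z_{ij}(s)=\frac{1}{2L+1}x_i(s)$; $z_{ij}(s+1)=z_{ij}(s)+z_{(i-1)j}(s)+z_{(i+1)j}(s)$; if $L\ge2$: $z_{ij}(s+2)=z_{ij}(s+1)+(z_{(i-1)j}(s+1)-z_{(i-1)j}(s))+(z_{(i+1)j}(s+1)-z_{(i+1)j}(s))-2z_{ij}(s)$; and for $3\le m\le L$: $z_{ij}(s+m)=z_{ij}(s+m-1)+(z_{(i-1)j}(s+m-1)-z_{(i-1)j}(s+m-2))+(z_{(i+1)j}(s+m-1)-z_{(i+1)j}(s+m-2))-(z_{ij}(s+m-2)-z_{ij}(s+m-3))$. (Thus each $z_{ij}(k)$, $k\ge j$, is determined by the cycle $s\le k\le s+L$ containing $k$.) For $k\ge0$ let $j_k\in\{0,\dots,L\}$ with $j_k\equiv k\pmod{L+1}$ and set $$y_i(k)=z_{ij_k}(k)+\sum_{l\in\{0,\dots,L\},\,l\neq j_k}\big(z_{il}(k)-z_{il}(k-1)\big).$$ Then for all $i$: if $k\le L$, $$y_i(k)=\frac{1}{2L+1}\Big(x_i(k)+\sum_{j=1}^{k}\big(x_{i-j}(k-j)+x_{i+j}(k-j)\big)\Big),$$ and if $k>L$, $$y_i(k)=\frac{1}{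2L+1}\Big(x_i(k)+\sum_{j=1}^{L}\big(x_{i-j}(k-j)+x_{i+j}(k-j)\big)\Big).$$
   Context: Sensors indexed by $i\in\mathbb Z$ on a line with time-varying measurements $x_i(k)$; sensor $i$ maintains an auxiliary vector $(z_{i0}(k),\dots,z_{iL}(k))$ and a consensus variable $y_i(k)$, and communicates only with sensors $i\pm1$. *)

theory Defs
  imports Complex_Main
begin

text \<open>Values within one cycle starting at time s: cyc L x0 m i = z_{ij}(s+m),
  where x0 i = x_i(s). The recursion for m = 0, 1, 2 and m >= 3 follows the paper.\<close>
fun cyc :: "nat \<Rightarrow> (int \<Rightarrow> real) \<Rightarrow> nat \<Rightarrow> int \<Rightarrow> real" where
  "cyc L x0 0 i = x0 i / (2 * real L + 1)"
| "cyc L x0 (Suc 0) i = cyc L x0 0 i + cyc L x0 0 (i - 1) + cyc L x0 0 (i + 1)"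
| "cyc L x0 (Suc (Suc 0)) i =
     cyc L x0 1 i
     + (cyc L x0 1 (i - 1) - cyc L x0 0 (i - 1))
     + (cyc L x0 1 (i + 1) - cyc L x0 0 (i + 1))
     - 2 * cyc L x0 0 i"
| "cyc L x0 (Suc (Suc (Suc m))) i =
     cyc L x0 (m + 2) i
     + (cyc L x0 (m + 2) (i - 1) - cyc L x0 (m + 1) (i - 1))
     + (cyc L x0 (m + 2) (i + 1) - cyc L x0 (m + 1) (i + 1))
     - (cyc L x0 (m + 1) i - cyc L x0 m i)"

definition zval :: "nat \<Rightarrow> (int \<Rightarrow> nat \<Rightarrow> real) \<Rightarrow> int \<Rightarrow> nat \<Rightarrow> int \<Rightarrow> real" where
  "zval L x i j k =
     (if k < int j then 0
      else (let s = int j + int (L + 1) * ((k - int j) div int (L + 1));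
                m = nat ((k - int j) mod int (L + 1))
            in cyc L (\<lambda>i'. x i' (nat s)) m i))"

definition yval :: "nat \<Rightarrow> (int \<Rightarrow> nat \<Rightarrow> real) \<Rightarrow> int \<Rightarrow> nat \<Rightarrow> real" where
  "yval L x i k =
     zval L x i (k mod (L + 1)) (int k)
     + (\<Sum>l \<in> {0..L} - {k mod (L + 1)}. zval L x i l (int k) - zval L x i l (int k - 1))"

end

theory Submission imports Defs begin
lemma cyc_diff2: "(\<forall>i. cyc L x0 (Suc m) i - cyc L x0 m i = (x0 (i - int (Suc m)) + x0 (i + int (Suc m))) / (2*real L+1))
  \<and> (\<forall>i. cyc L x0 (Suc (Suc m)) i - cyc L x0 (Suc m) i = (x0 (i - int (Suc (Suc m))) + x0 (i + int (Suc (Suc m)))) / (2*real L+1))"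
proof (induction m)
  case 0
  show ?case by (simp add: add_divide_distrib[symmetric] diff_divide_distrib[symmetric] algebra_simps)
next
  case (Suc m)
  show ?case
  proof (intro conjI allI)
    fix i show "cyc L x0 (Suc (Suc m)) i - cyc L x0 (Suc m) i = (x0 (i - int (Suc (Suc m))) + x0 (i + int (Suc (Suc m)))) / (2*real L+1)"
      using Suc by blast
  next
    fix i
    have e: "cyc L x0 (Suc(Suc(Suc m))) i - cyc L x0 (Suc (Suc m)) i = (cyc L x0 (Suc(Suc m)) (i-1) - cyc L x0 (Suc m) (i-1)) + (cyc L x0 (Suc(Suc m)) (i+1) - cyc L x0 (Suc m) (i+1)) - (cyc L x0 (Suc m) i - cyc L x0 m i)"
      by (simp add: numeral_2_eq_2)
    show "cyc L x0 (Suc (Suc (Suc m))) i - cyc L x0 (Suc (Suc m)) i = (x0 (i - int (Suc (Suc (Suc m)))) + x0 (i + int (Suc (Suc (Suc m))))) / (2*real L+1)"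
      unfolding e using Suc by (simp add: add_divide_distrib[symmetric] diff_divide_distrib[symmetric] algebra_simps)
  qed
qed

lemma cyc_diff: "cyc L x0 (Suc m) i - cyc L x0 m i = (x0 (i - int (Suc m)) + x0 (i + int (Suc m))) / (2*real L+1)"
  using cyc_diff2 by blast

lemma z_main: "zval L x i (k mod (L+1)) (int k) = x i k / (2*real L+1)"
proof -
  have "int k - int (k mod (L+1)) = int (L+1) * int (k div (L+1))"
    by (metis add_diff_cancel_right' div_mult_mod_eq mult.commute of_nat_add of_nat_mult)
  moreover have "\<not> k < k mod (L+1)" by (simp add: not_less)
  moreover have "nat (int (k mod (L+1)) + int (L+1) * int (k div (L+1))) = k"
    by (metis div_mult_mod_eq mult.commute nat_int of_nat_add of_nat_mult add.commute)
  ultimately show ?thesis unfolding zval_def by (simp add: Let_def)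
qed

lemma z_zero: "int k < int l \<Longrightarrow> zval L x i l (int k) - zval L x i l (int k - 1) = 0"
  unfolding zval_def by simp

lemma z_diff:
  assumes "l \<le> L" "l \<le> k" "l \<noteq> k mod (L+1)"
  shows "zval L x i l (int k) - zval L x i l (int k - 1)
     = (x (i - int ((k - l) mod (L+1))) (k - (k - l) mod (L+1)) + x (i + int ((k - l) mod (L+1))) (k - (k - l) mod (L+1))) / (2*real L+1)"
proof -
  define N where "N = L+1"
  define m where "m = (k - l) mod N"
  define Q where "Q = (k - l) div N"
  have kl: "k - l = N*Q + m" unfolding m_def Q_def by simp
  have mN: "m < N" unfolding m_def N_def by simp
  have m0: "m \<noteq> 0"
  proof
    assume "m = 0"
    then have "(k - l) mod N = 0" unfolding m_def .
    then have "k mod N = l mod N"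
      using assms(2) by (metis add_diff_inverse_nat mod_add_left_eq not_le add.commute add_0 mod_add_right_eq)
    moreover have "l mod N = l" using assms(1) N_def by simp
    ultimately show False using assms(3) N_def by simp
  qed
  have s: "l + N*Q = k - m" using kl assms(2) by linarith
  have e1: "int k - int l = int N * int Q + int m"
  proof -
    have "int (k - l) = int (N*Q+m)" using kl by simp
    then show ?thesis using assms(2) by (simp add: of_nat_diff)
  qed
  have e2: "int k - 1 - int l = int N * int Q + int (m - 1)" using e1 m0 by (simp add: of_nat_diff)
  have d1: "(int k - int l) div int N = int Q" unfolding e1 using mN by simp
  have r1: "(int k - int l) mod int N = int m" unfolding e1 using mN by simp
  have d2: "(int k - 1 - int l) div int N = int Q" unfolding e2 using mN by simp
  have r2: "(int k - 1 - int l) mod int N = int (m - 1)" unfolding e2 using mN by simp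
  have n1: "\<not> int k < int l" using assms(2) by simp
  have n2: "\<not> int k - 1 < int l" using assms(2) kl m0 by linarith
  have ss: "nat (int l + int N * int Q) = k - m" using s by (metis nat_int of_nat_add of_nat_mult)
  have "zval L x i l (int k) - zval L x i l (int k - 1)
      = cyc L (\<lambda>i'. x i' (k - m)) (Suc (m-1)) i - cyc L (\<lambda>i'. x i' (k - m)) (m-1) i"
    unfolding zval_def Let_def using n1 n2 d1 r1 d2 r2 ss m0 N_def
    using nat_diff_distrib'[of "int m" 1] m0 by (simp del: of_nat_add add: of_nat_add[symmetric])
  also have "\<dots> = (x (i - int m) (k - m) + x (i + int m) (k - m)) / (2*real L+1)"
    unfolding cyc_diff using m0 by simp
  finally show ?thesis unfolding m_def N_def .
qed

lemma phi_int: "l \<le> k \<Longrightarrow> int ((k - l) mod N) = (int k - int l) mod int N"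
  by (simp add: of_nat_diff zmod_int)

lemma psi_int: "m \<le> N \<Longrightarrow> int ((k + N - m) mod N) = (int k - int m) mod int N"
proof -
  assume "m \<le> N"
  then have "int ((k + N - m) mod N) = (int k + int N - int m) mod int N" by (simp add: of_nat_diff zmod_int)
  also have "\<dots> = (int k - int m) mod int N"
    by (metis add.commute add_diff_eq mod_add_self1)
  finally show ?thesis .
qed

lemma psi_le: "1 \<le> (m::nat) \<Longrightarrow> m \<le> k \<Longrightarrow> m < N \<Longrightarrow> (k + N - m) mod N \<le> k"
proof -
  assume a: "1 \<le> m" "m \<le> k" "m < N"
  show ?thesis
  proof (cases "k - m < N")
    case True
    have eq: "(k + N - m) = (k - m) + N" using a(2) by linarith
    have "((k - m) + N) mod N = k - m" using True by simp
    then have "(k + N - m) mod N = k - m" unfolding eq .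
    then show ?thesis by simp
  next
    case False
    have "(k + N - m) mod N < N" using a by simp
    then show ?thesis using False by linarith
  qed
qed

lemma reidx:
  fixes g :: "nat \<Rightarrow> real"
  assumes L: "L \<ge> 1"
  shows "(\<Sum>l\<in>{l\<in>{0..L} - {k mod (L+1)}. l \<le> k}. g ((k - l) mod (L+1))) = (\<Sum>m=1..min k L. g m)"
proof (rule sum.reindex_bij_witness[where j = "\<lambda>l. (k - l) mod (L+1)" and i = "\<lambda>m. (k + (L+1) - m) mod (L+1)"])
  fix a assume a: "a \<in> {l\<in>{0..L} - {k mod (L+1)}. l \<le> k}"
  then have al: "a \<le> L" "a \<le> k" "a \<noteq> k mod (L+1)" by auto
  have "int ((k + (L+1) - (k - a) mod (L+1)) mod (L+1)) = (int k - int ((k - a) mod (L+1))) mod int (L+1)"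
    by (rule psi_int) simp
  also have "\<dots> = (int k - (int k - int a) mod int (L+1)) mod int (L+1)" using al phi_int by simp
  also have "\<dots> = int a mod int (L+1)" by (simp add: mod_diff_right_eq)
  also have "\<dots> = int a" using al by simp
  finally show "(k + (L+1) - (k - a) mod (L+1)) mod (L+1) = a" by simp
  have ne: "(k - a) mod (L+1) \<noteq> 0"
  proof
    assume h: "(k - a) mod (L+1) = 0"
    have "(int k - int a) mod int (L+1) = 0" using phi_int[OF al(2), of "L+1"] h by simp
    then have "int k mod int (L+1) = int a mod int (L+1)" by (simp add: mod_eq_dvd_iff dvd_eq_mod_eq_0)
    then have "int (k mod (L+1)) = int a" using al by (simp add: zmod_int)
    then show False using al by simp
  qed
  have "(k - a) mod (L+1) \<le> L" using mod_less_divisor[of "L+1" "k-a"] by linarith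
  moreover have "(k - a) mod (L+1) \<le> k" using mod_less_eq_dividend[of "k-a" "L+1"] by linarith
  ultimately show "(k - a) mod (L+1) \<in> {1..min k L}" using ne by auto
next
  fix b assume b: "b \<in> {1..min k L}"
  then have bl: "1 \<le> b" "b \<le> k" "b \<le> L" by auto
  have le: "(k + (L+1) - b) mod (L+1) \<le> k" using psi_le[of b k "L+1"] bl by simp
  have "int ((k - (k + (L+1) - b) mod (L+1)) mod (L+1)) = (int k - int ((k + (L+1) - b) mod (L+1))) mod int (L+1)"
    using phi_int[OF le] by simp
  also have "\<dots> = (int k - (int k - int b) mod int (L+1)) mod int (L+1)" using psi_int[of b "L+1" k] bl by simp
  also have "\<dots> = int b mod int (L+1)" by (simp add: mod_diff_right_eq)
  also have "\<dots> = int b" using bl by simp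
  finally show "(k - (k + (L+1) - b) mod (L+1)) mod (L+1) = b" by simp
  have "(k + (L+1) - b) mod (L+1) \<le> L" using mod_less_divisor[of "L+1" "k + (L+1) - b"] by linarith
  moreover have "(k + (L+1) - b) mod (L+1) \<noteq> k mod (L+1)"
  proof
    assume h: "(k + (L+1) - b) mod (L+1) = k mod (L+1)"
    have p: "int ((k + (L+1) - b) mod (L+1)) = (int k - int b) mod int (L+1)"
      by (rule psi_int) (use bl in simp)
    have "int ((k + (L+1) - b) mod (L+1)) = int (k mod (L+1))" using h by (rule arg_cong)
    then have "(int k - int b) mod int (L+1) = int (k mod (L+1))" using p by linarith
    then have "(int k - int b) mod int (L+1) = int k mod int (L+1)" by (simp only: zmod_int)
    then have "int (L+1) dvd (int k - int b) - int k" by (simp only: mod_eq_dvd_iff)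
    then have "int (L+1) dvd int b" by simp
    then have "L+1 dvd b" by (simp only: of_nat_dvd_iff)
    then have "L+1 \<le> b" using bl by (intro dvd_imp_le) auto
    then show False using bl by simp
  qed
  ultimately show "(k + (L+1) - b) mod (L+1) \<in> {l\<in>{0..L} - {k mod (L+1)}. l \<le> k}" using le by auto
qed simp


theorem theorem5:
  fixes L :: nat and x :: "int \<Rightarrow> nat \<Rightarrow> real" and i :: int and k :: nat
  assumes "L \<ge> 1"
  shows "(k \<le> L \<longrightarrow> yval L x i k =
            (1 / (2 * real L + 1)) *
              (x i k + (\<Sum>j = 1..k. x (i - int j) (k - j) + x (i + int j) (k - j))))
       \<and> (k > L \<longrightarrow> yval L x i k =
            (1 / (2 * real L + 1)) *
              (x i k + (\<Sum>j = 1..L. x (i - int j) (k - j) + x (i + int j) (k - j))))"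
proof -
  define q where "q = 2 * real L + 1"
  define g where "g m = (x (i - int m) (k - m) + x (i + int m) (k - m)) / q" for m
  define D where "D l = zval L x i l (int k) - zval L x i l (int k - 1)" for l
  define S where "S = {l\<in>{0..L} - {k mod (L+1)}. l \<le> k}"
  have "(\<Sum>l\<in>{0..L} - {k mod (L+1)}. D l) = (\<Sum>l\<in>S. D l)"
  proof (rule sum.mono_neutral_right)
    show "\<forall>l\<in>{0..L} - {k mod (L+1)} - S. D l = 0"
      using z_zero unfolding S_def D_def by (metis (mono_tags, lifting) DiffE mem_Collect_eq not_le of_nat_less_iff)
  qed (auto simp: S_def)
  also have "\<dots> = (\<Sum>l\<in>S. g ((k - l) mod (L+1)))"
    by (rule sum.cong) (auto simp: S_def D_def g_def q_def z_diff)
  also have "\<dots> = (\<Sum>m=1..min k L. g m)" unfolding S_def by (rule reidx[OF assms])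
  finally have h: "yval L x i k = x i k / q + (\<Sum>m=1..min k L. g m)"
    unfolding yval_def D_def q_def z_main by simp
  have f: "(1/q) * (x i k + (\<Sum>j = 1..n. x (i - int j) (k - j) + x (i + int j) (k - j)))
      = x i k / q + (\<Sum>m=1..n. g m)" for n
    unfolding g_def sum_divide_distrib[symmetric] by (simp add: add_divide_distrib[symmetric])
  show ?thesis using h f[of k] f[of L] unfolding q_def by (auto simp: min_def)
qed
end
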